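(* Let $h_1,\dots,h_N\in\mathbb{C}$. Define $|h_{IDEAL}| = \max\{ |\sum_{i=1}^N b_i h_i| : b_i\in\mathbb{C},\ |b_i|\le 1\}$ and $|h_{REAL}| = \max\{ |\sum_{i=1}^N b_i h_i| : b_i \in\{0,1\}\}$. Then $|h_{REAL}| \ge \frac{|h_{IDEAL}|}{\pi}$.
   Context: Here $h_i$ is the (complex) channel contribution of the $i$-th element of a passive reflecting surface; $h_{IDEAL}$ corresponds to elements whose complex reflection coefficient can be set arbitrarily with magnitude at most $1$, and $h_{REAL}$ to elements restricted to two states (off $=0$, on $=1$). The direct-path term is not included. *)

theory Defs
  imports "HOL-Analysis.Analysis"
begin

definition h_ideal :: "nat \<Rightarrow> (nat \<Rightarrow> complex) \<Rightarrow> real" where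
  "h_ideal N h = Sup {cmod (\<Sum>i=1..N. b i * h i) | b. \<forall>i\<in>{1..N}. cmod (b i) \<le> 1}"

definition h_real :: "nat \<Rightarrow> (nat \<Rightarrow> complex) \<Rightarrow> real" where
  "h_real N h = Max {cmod (\<Sum>i=1..N. b i * h i) | b. \<forall>i\<in>{1..N}. b i \<in> {0, 1}}"

end

theory Submission
  imports Defs
begin

definition pp :: "real \<Rightarrow> real" where "pp t = max 0 (cos t)"

lemma pp_cont: "continuous_on S pp"
  unfolding pp_def by (intro continuous_intros)

lemma pp_int: "(pp has_integral 2) {-pi..pi}"
proof -
  have z1: "(pp has_integral 0) {-pi..-pi/2}"
  proof (rule has_integral_eq[of _ "\<lambda>_. 0"])
    fix x assume "x \<in> {-pi..-pi/2}"
    then have "0 \<le> cos (x + pi)" by (intro cos_ge_zero) auto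
    then show "0 = pp x" unfolding pp_def by simp
  qed auto
  have z3: "(pp has_integral 0) {pi/2..pi}"
  proof (rule has_integral_eq[of _ "\<lambda>_. 0"])
    fix x assume "x \<in> {pi/2..pi}"
    then have "0 \<le> cos (x - pi)" by (intro cos_ge_zero) auto
    then show "0 = pp x" unfolding pp_def by simp
  qed auto
  have z2: "(pp has_integral 2) {-pi/2..pi/2}"
  proof (rule has_integral_eq[of _ cos])
    fix x assume "x \<in> {-pi/2..pi/2}"
    then have "cos x \<ge> 0" by (intro cos_ge_zero) auto
    then show "cos x = pp x" unfolding pp_def by simp
  next
    have "(cos has_integral (sin (pi/2) - sin (-pi/2))) {-pi/2..pi/2}"
      by (intro fundamental_theorem_of_calculus) (auto intro!: derivative_eq_intros simp: has_real_derivative_iff_has_vector_derivative[symmetric])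
    then show "(cos has_integral 2) {-pi/2..pi/2}" by simp
  qed
  have "(pp has_integral (0 + 2)) {-pi..pi/2}"
    by (rule has_integral_combine[OF _ _ z1 z2]) auto
  from has_integral_combine[OF _ _ this z3] show ?thesis by simp
qed

lemma pp_shift:
  assumes "-pi < a" "a \<le> pi"
  shows "integral {0..2*pi} (\<lambda>t. pp (t - a)) = 2"
proof -
  have "integral {0..2*pi} (\<lambda>t. pp (t - a)) = integral {0 + (-a)..2*pi + (-a)} pp"
    using integral_shift[where a=0 and b="2*pi" and c="-a" and f=pp] pp_cont by (simp add: o_def)
  also have "\<dots> = integral {-a..pi} pp + integral {pi..2*pi-a} pp"
    using Henstock_Kurzweil_Integration.integral_combine[where a="-a" and c=pi and b="2*pi-a" and f=pp] assms integrable_continuous_real[OF pp_cont] by auto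
  also have "integral {pi..2*pi-a} pp = integral {-pi..-a} (pp \<circ> (\<lambda>x. x + 2*pi))"
    using integral_shift[where a="-pi" and b="-a" and c="2*pi" and f=pp] pp_cont by simp
  also have "pp \<circ> (\<lambda>x. x + 2*pi) = pp" by (auto simp: pp_def fun_eq_iff)
  also have "integral {-a..pi} pp + integral {-pi..-a} pp = integral {-pi..pi} pp"
    using Henstock_Kurzweil_Integration.integral_combine[where a="-pi" and c="-a" and b=pi and f=pp] assms integrable_continuous_real[OF pp_cont] by auto
  also have "\<dots> = 2" using pp_int by (rule integral_unique)
  finally show ?thesis .
qed

lemma re_rot: "Re (cis (-t) * h) = cmod h * cos (t - Arg h)"
proof -
  have "cis (-t) * h = cis (-t) * (complex_of_real (cmod h) * cis (Arg h))"
    using rcis_cmod_Arg[of h] by (simp add: rcis_def)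
  also have "\<dots> = complex_of_real (cmod h) * cis (Arg h - t)"
    by (simp add: cis_mult algebra_simps)
  finally show ?thesis by (simp add: cos_diff mult.commute)
qed

lemma exists_theta:
  fixes h :: "nat \<Rightarrow> complex"
  shows "\<exists>t. (\<Sum>i=1..N. cmod (h i)) / pi \<le> (\<Sum>i=1..N. cmod (h i) * pp (t - Arg (h i)))"
proof (rule ccontr)
  define S where "S = (\<Sum>i=1..N. cmod (h i))"
  define F where "F = (\<lambda>t. \<Sum>i=1..N. cmod (h i) * pp (t - Arg (h i)))"
  assume "\<not> ?thesis"
  then have lt: "\<And>t. F t < S / pi" unfolding F_def S_def by (simp add: not_le)
  have cF: "continuous_on {0..2*pi} F" unfolding F_def pp_def by (intro continuous_intros)
  have "integral {0..2*pi} F = (\<Sum>i=1..N. integral {0..2*pi} (\<lambda>t. cmod (h i) * pp (t - Arg (h i))))"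
    unfolding F_def
    by (rule integral_sum) (auto intro!: integrable_continuous_real continuous_intros simp: pp_def)
  also have "\<dots> = (\<Sum>i=1..N. cmod (h i) * 2)"
    using pp_shift Arg_bounded by (simp add: integral_mult_right)
  also have "\<dots> = 2 * S" unfolding S_def by (simp add: sum_distrib_left mult.commute)
  finally have eq: "integral {0..2*pi} F = 2 * S" .
  have "integral {0..2*pi} F < integral {0..2*pi} (\<lambda>_. S / pi)"
    apply (rule integral_less_real)
    using cF lt apply (auto simp: continuous_on_const)
    using pi_gt_zero by linarith
  also have "\<dots> = 2 * S" by simp
  finally show False using eq by simp
qed

theorem theorem2:
  fixes N :: nat and h :: "nat \<Rightarrow> complex"
  shows "h_real N h \<ge> h_ideal N h / pi"
proof -
  define S where "S = (\<Sum>i=1..N. cmod (h i))"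
  have ideal: "h_ideal N h \<le> S"
    unfolding h_ideal_def
  proof (rule cSup_least)
    show "{cmod (\<Sum>i = 1..N. b i * h i) |b. \<forall>i\<in>{1..N}. cmod (b i) \<le> 1} \<noteq> {}"
    proof -
      have "0 \<in> {cmod (\<Sum>i = 1..N. b i * h i) |b. \<forall>i\<in>{1..N}. cmod (b i) \<le> 1}"
        by (rule CollectI, rule exI[of _ "\<lambda>_. 0"]) simp
      then show ?thesis by blast
    qed
  next
    fix x assume "x \<in> {cmod (\<Sum>i = 1..N. b i * h i) |b. \<forall>i\<in>{1..N}. cmod (b i) \<le> 1}"
    then obtain b where x: "x = cmod (\<Sum>i = 1..N. b i * h i)" and b: "\<forall>i\<in>{1..N}. cmod (b i) \<le> 1"
      by auto
    have "x \<le> (\<Sum>i = 1..N. cmod (b i * h i))" unfolding x by (rule norm_sum)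
    also have "\<dots> \<le> S" unfolding S_def
      by (rule sum_mono) (use b in \<open>auto simp: norm_mult intro!: mult_left_le_one_le\<close>)
    finally show "x \<le> S" .
  qed
  obtain t where t: "S / pi \<le> (\<Sum>i=1..N. cmod (h i) * pp (t - Arg (h i)))"
    using exists_theta[of h N] unfolding S_def by auto
  define b where "b = (\<lambda>i. if 0 < Re (cis (-t) * h i) then (1::complex) else 0)"
  let ?A = "{cmod (\<Sum>i=1..N. b i * h i) | b. \<forall>i\<in>{1..N}. b i \<in> {0, 1}}"
  have fin: "finite ?A"
  proof (rule finite_subset)
    show "?A \<subseteq> (\<lambda>B. cmod (\<Sum>i\<in>B. h i)) ` Pow {1..N}"
    proof
      fix x assume "x \<in> ?A"
      then obtain c where x: "x = cmod (\<Sum>i=1..N. c i * h i)" and c: "\<forall>i\<in>{1..N}. c i \<in> {0, 1}"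
        by auto
      have "(\<Sum>i=1..N. c i * h i) = (\<Sum>i=1..N. if c i = 1 then h i else 0)"
        by (rule sum.cong) (use c in auto)
      also have "\<dots> = (\<Sum>i\<in>{i\<in>{1..N}. c i = 1}. h i)"
        by (rule sum.inter_filter[symmetric]) simp
      finally show "x \<in> (\<lambda>B. cmod (\<Sum>i\<in>B. h i)) ` Pow {1..N}" unfolding x by auto
    qed
  qed simp
  have mem: "cmod (\<Sum>i=1..N. b i * h i) \<in> ?A"
    by (rule CollectI, rule exI[of _ b]) (simp add: b_def)
  have "(\<Sum>i=1..N. cmod (h i) * pp (t - Arg (h i))) = (\<Sum>i=1..N. Re (cis (-t) * (b i * h i)))"
  proof (rule sum.cong)
    fix i
    have "cmod (h i) * pp (t - Arg (h i)) = max 0 (Re (cis (-t) * h i))"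
      unfolding re_rot pp_def by (simp add: max_mult_distrib_left)
    then show "cmod (h i) * pp (t - Arg (h i)) = Re (cis (-t) * (b i * h i))"
      by (simp add: b_def)
  qed simp
  also have "\<dots> = Re (cis (-t) * (\<Sum>i=1..N. b i * h i))"
    by (simp add: sum_distrib_left)
  also have "\<dots> \<le> cmod (cis (-t) * (\<Sum>i=1..N. b i * h i))" by (rule complex_Re_le_cmod)
  also have "\<dots> = cmod (\<Sum>i=1..N. b i * h i)" by (simp add: norm_mult)
  also have "\<dots> \<le> h_real N h" unfolding h_real_def using fin mem by (rule Max_ge)
  finally have "S / pi \<le> h_real N h" using t by linarith
  moreover have "h_ideal N h / pi \<le> S / pi" using ideal by (simp add: divide_right_mono)
  ultimately show ?thesis by linarith
qed

end
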